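(* In the setting described in the context, there is a positive constant $C_2=C_2(d,\lambda,\gamma,r_0)$ such that for all $n\in\mathbb{N}_\infty$, $s\in[0,1]$ and $y\in\mathbb{R}^d$, $$\|\nabla a^n\|_{\infty,\gamma}\le C_2\qquad\text{and}\qquad|a^n_s(y)|\le C_2\Big(1+\sup_{t\in[0,1]}\|b_t\|_\infty\Big).$$ Moreover, for each $t\in[0,1]$, $y\in\mathbb{R}^d$ and $j=0,1$, $\lim_{n\to\infty}\nabla^j_ya^n_t(y)=\nabla^j_ya^\infty_t(y)$.
   Context: Setting. $Z$ is a Lévy process in $\mathbb{R}^d$ with Lévy measure $\nu$, $N(\mathrm{d}t,\mathrm{d}z)$ its jump measure and $\tilde N(\mathrm{d}t,\mathrm{d}z)=N(\mathrm{d}t,\mathrm{d}z)-\mathrm{d}t\,\nu(\mathrm{d}z)$; for each $r>0$ there is $\eta_r\in\mathbb{R}^d$ with $Z_t=\int_0^t\int_{|z|<r}z\tilde N(\mathrm{d}s,\mathrm{d}z)+\int_0^t\int_{|z|\ge r}zN(\mathrm{d}s,\mathrm{d}z)+\eta_rt$. Let $\gamma\in(0,1)$ and $\lambda\ge0$; $b:[0,1]\times\mathbb{R}^d\to\mathbb{R}^d$ bounded Borel, $b^n_t=\varrho_n*b_t$ ($n\in\mathbb{N}$, $\varrho_n(x)=n^d\varrho(nx)$, $\varrho\ge0$ smooth compactly supported with $\int\varrho=1$), $b^\infty=b$, $\mathbb{N}_\infty=\mathbb{N}\cup\{\infty\}$. For $n\in\mathbb{N}_\infty$, $u^n:[0,1]\times\mathbb{R}^d\to\mathbb{R}^d$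 is the solution (constructed in the paper) of $\partial_tu^n+(\mathscr{L}_{\nu,\eta}-\lambda)u^n+b^n\cdot\nabla u^n+b^n=0$, $u^n_1=0$, where $\mathscr{L}_{\nu,\eta}$ is the generator of $Z$; it is $C^1$ in $x$ and satisfies $\sup_t\|u^n_t\|_\infty\le\sup_t\|b_t\|_\infty$; the sequence is such that (b) $\lim_{n}\sup_{t}\sup_{|x|\le R}|\nabla^ju^n_t-\nabla^ju^\infty_t|(x)=0$ for $R>0$, $j=0,1$, and $\lambda$ is such that (a) $\|\nabla u^n_t\|_\infty+[\nabla u^n_t]_\gamma\le\frac12$ for all $n\in\mathbb{N}_\infty$, $t\in[0,1]$. $\Phi^n_t(x)=x+u^n_t(x)$ (a $C^1$-diffeomorphism with inverse $(\Phi^n_t)^{-1}$), $g^n_s(y,z)=\Phi^n_s((\Phi^n_s)^{-1}(y)+z)-y$. Let $C_0>0$ be a constant with $\|\nabla_yg^n_s(\cdot,z)\|_\infty\le C_0(1\wedge|z|^\gamma)$ for all $n,s,z$, and fix $r_0\in(0,1)$ with $C_0r_0^\gamma+3r_0/2<1$. Define $$a^n_s(y):=\eta_{r_0}+\lambda u^n_s\big((\Phi^n_s)^{-1}(y)\big)-\int_{|z|\ge r_0}\Big(u^n_s\big((\Phi^n_s)^{-1}(y)+z\big)-u^n_s\big((\Phi^n_s)^{-1}(y)\big)\Big)\nu(\mathrm{d}z).$$ Notation: $[h]_\beta=\sup_{x\ne y}|h(x)-h(y)|/|x-y|^\beta$, $\|h\|_\beta=\|h\|_\infty+[h]_\beta$,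 $\|\nabla a^n\|_{\infty,\gamma}=\sup_s\|\nabla a^n_s\|_\gamma$. *)

theory Defs
  imports "HOL-Analysis.Analysis" "HOL-Library.Extended_Nat"
begin

definition grad :: "('a::real_normed_vector \<Rightarrow> 'b::real_normed_vector) \<Rightarrow> 'a \<Rightarrow> 'a \<Rightarrow>\<^sub>L 'b" where
  "grad f x = Blinfun (frechet_derivative f (at x))"

definition holder_norm_le :: "real \<Rightarrow> ('a::metric_space \<Rightarrow> 'b::real_normed_vector) \<Rightarrow> real \<Rightarrow> bool" where
  "holder_norm_le g f C \<longleftrightarrow>
     (\<exists>K1 K2. K1 + K2 \<le> C \<and> (\<forall>x. norm (f x) \<le> K1) \<and>
        (\<forall>x y. norm (f x - f y) \<le> K2 * dist x y powr g))"

definition levy_measure :: "'a::euclidean_space measure \<Rightarrow> bool" where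
  "levy_measure \<nu> \<longleftrightarrow> sets \<nu> = sets borel \<and> emeasure \<nu> {0} = 0 \<and>
     (\<integral>\<^sup>+ z. ennreal (min 1 (norm z ^ 2)) \<partial>\<nu>) < \<infinity>"

text \<open>Phi^n_t(x) = x + u^n_t(x); the index n ranges over enat (\<infinity> = the limit case).\<close>
definition Phi :: "(enat \<Rightarrow> real \<Rightarrow> 'a \<Rightarrow> 'a::real_normed_vector) \<Rightarrow> enat \<Rightarrow> real \<Rightarrow> 'a \<Rightarrow> 'a" where
  "Phi u n t x = x + u n t x"

definition gfun :: "(enat \<Rightarrow> real \<Rightarrow> 'a \<Rightarrow> 'a::real_normed_vector) \<Rightarrow> enat \<Rightarrow> real \<Rightarrow> 'a \<Rightarrow> 'a \<Rightarrow> 'a" where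
  "gfun u n s y z = Phi u n s (inv (Phi u n s) y + z) - y"

definition acoef :: "'a measure \<Rightarrow> 'a \<Rightarrow> real \<Rightarrow> real \<Rightarrow> (enat \<Rightarrow> real \<Rightarrow> 'a \<Rightarrow> 'a::euclidean_space)
    \<Rightarrow> enat \<Rightarrow> real \<Rightarrow> 'a \<Rightarrow> 'a" where
  "acoef \<nu> \<eta> lam r0 u n s y =
     \<eta> + lam *\<^sub>R u n s (inv (Phi u n s) y)
     - (LINT z:{z. r0 \<le> norm z}|\<nu>. u n s (inv (Phi u n s) y + z) - u n s (inv (Phi u n s) y))"

end

theory Submission
  imports Defs
begin

locale lev =
  fixes \<nu> :: "'a::euclidean_space measure" and A :: "'a set"
  assumes sets_nu: "sets \<nu> = sets borel" and A_meas: "A \<in> sets borel" and A_fin: "emeasure \<nu> A < \<infinity>"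
begin

lemma meas: "f \<in> borel_measurable borel \<Longrightarrow> f \<in> borel_measurable \<nu>"
  using measurable_cong_sets[OF sets_nu refl, of borel] by blast

lemma A_nu: "A \<in> sets \<nu>" using sets_nu A_meas by simp

lemma si_bound:
  fixes f :: "'a \<Rightarrow> 'b::{banach,second_countable_topology}"
  assumes f: "f \<in> borel_measurable borel" and b: "\<And>z. z \<in> A \<Longrightarrow> norm (f z) \<le> c"
  shows "set_integrable \<nu> A f"
  unfolding set_integrable_def
proof (rule Bochner_Integration.integrable_bound)
  show "integrable \<nu> (\<lambda>x. indicator A x * c)"
    using integrable_real_indicator[OF A_nu A_fin] by simp
  show "(\<lambda>x. indicator A x *\<^sub>R f x) \<in> borel_measurable \<nu>"
    using meas[OF f] A_nu by (intro borel_measurable_scaleR borel_measurable_indicator) auto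
  show "AE x in \<nu>. norm (indicator A x *\<^sub>R f x) \<le> norm (indicator A x * c)"
    using b by (auto simp: indicator_def intro: order_trans[OF _ abs_ge_self])
qed

lemma LINT_bound:
  fixes f :: "'a \<Rightarrow> 'b::{banach,second_countable_topology}"
  assumes f: "f \<in> borel_measurable borel" and b: "\<And>z. z \<in> A \<Longrightarrow> norm (f z) \<le> c" and c: "0 \<le> c"
  shows "norm (LINT z:A|\<nu>. f z) \<le> c * measure \<nu> A"
proof -
  have si: "set_integrable \<nu> A f" by (rule si_bound[OF f b])
  have "norm (LINT z:A|\<nu>. f z) \<le> (LINT z:A|\<nu>. norm (f z))"
    by (rule set_integral_norm_bound[OF si])
  also have "\<dots> \<le> (LINT z:A|\<nu>. c)"
  proof (rule set_integral_mono)
    show "set_integrable \<nu> A (\<lambda>x. norm (f x))"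
      using f b by (intro si_bound) auto
    show "set_integrable \<nu> A (\<lambda>x. c)"
      using c by (intro si_bound) auto
    show "\<And>x. x \<in> A \<Longrightarrow> norm (f x) \<le> c" by (rule b)
  qed
  also have "\<dots> = c * measure \<nu> A"
    using A_nu A_fin by (simp add: set_integral_const)
  finally show ?thesis .
qed

end

definition good :: "real \<Rightarrow> ('a::euclidean_space \<Rightarrow> 'a) \<Rightarrow> bool" where
  "good \<gamma> u \<longleftrightarrow> (\<forall>x. (u has_derivative blinfun_apply (grad u x)) (at x)) \<and> continuous_on UNIV (grad u)
     \<and> (\<forall>x. norm (grad u x) \<le> 1/2) \<and> (\<forall>x y. norm (grad u x - grad u y) \<le> 1/2 * dist x y powr \<gamma>)"

lemma exists_unit: "\<exists>e::'a::euclidean_space. norm e = 1"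
proof -
  obtain e :: 'a where "e \<in> Basis" using nonempty_Basis by blast
  then show ?thesis using norm_Basis by blast
qed

lemma good_intro:
  fixes u :: "'a::euclidean_space \<Rightarrow> 'a"
  assumes d: "\<forall>x. u differentiable (at x)" and c: "continuous_on UNIV (grad u)"
    and h: "holder_norm_le \<gamma> (grad u) (1/2)"
  shows "good \<gamma> u"
proof -
  have D: "(u has_derivative blinfun_apply (grad u x)) (at x)" for x
  proof -
    have fd: "(u has_derivative frechet_derivative u (at x)) (at x)"
      using d frechet_derivative_works by blast
    then have "bounded_linear (frechet_derivative u (at x))" by (rule has_derivative_bounded_linear)
    then have "blinfun_apply (grad u x) = frechet_derivative u (at x)"
      unfolding grad_def by (rule bounded_linear_Blinfun_apply)
    with fd show ?thesis by simp
  qed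
  obtain K1 K2 where K: "K1 + K2 \<le> 1/2" "\<And>x. norm (grad u x) \<le> K1"
    "\<And>x y. norm (grad u x - grad u y) \<le> K2 * dist x y powr \<gamma>"
    using h unfolding holder_norm_le_def by blast
  obtain e :: 'a where e: "norm e = 1" using exists_unit by blast
  have "0 \<le> K2 * dist 0 e powr \<gamma>" using K(3)[of 0 e] norm_ge_zero order_trans by blast
  then have K2: "0 \<le> K2" using e by (simp add: dist_norm)
  have K1: "0 \<le> K1" using K(2)[of 0] norm_ge_zero order_trans by blast
  have "norm (grad u x - grad u y) \<le> 1/2 * dist x y powr \<gamma>" for x y
  proof -
    have "K2 * dist x y powr \<gamma> \<le> 1/2 * dist x y powr \<gamma>"
      using K K1 by (intro mult_right_mono) auto
    then show ?thesis using K(3)[of x y] by linarith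
  qed
  moreover have "norm (grad u x) \<le> 1/2" for x using K(2)[of x] K K2 by linarith
  ultimately show ?thesis unfolding good_def using D c by blast
qed

definition psi :: "('a::euclidean_space \<Rightarrow> 'a) \<Rightarrow> 'a \<Rightarrow> 'a" where "psi u = inv (\<lambda>x. x + u x)"

context
  fixes \<gamma> :: real and u :: "'a::euclidean_space \<Rightarrow> 'a"
  assumes g: "good \<gamma> u"
begin

lemma g_der: "(u has_derivative blinfun_apply (grad u x)) (at x)" using g unfolding good_def by blast
lemma g_norm: "norm (grad u x) \<le> 1/2" using g unfolding good_def by blast
lemma g_hol: "norm (grad u x - grad u y) \<le> 1/2 * dist x y powr \<gamma>" using g unfolding good_def by blast
lemma g_cont: "continuous_on UNIV (grad u)" using g unfolding good_def by blast

lemma g_lip: "norm (u x - u y) \<le> 1/2 * norm (x - y)"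
proof (rule differentiable_bound[of UNIV u "\<lambda>x. blinfun_apply (grad u x)"])
  show "\<And>x. x \<in> UNIV \<Longrightarrow> (u has_derivative blinfun_apply (grad u x)) (at x within UNIV)"
    using g_der by simp
  show "\<And>x. x \<in> UNIV \<Longrightarrow> onorm (blinfun_apply (grad u x)) \<le> 1/2"
    using g_norm by (simp add: norm_blinfun.rep_eq[symmetric])
qed auto

lemma g_cont_u: "continuous_on UNIV u"
  using g_der has_derivative_continuous continuous_at_imp_continuous_on by blast

lemma g_inj: "inj (\<lambda>x. x + u x)"
proof (rule injI)
  fix x y assume "x + u x = y + u y"
  then have "x - y = u y - u x" by (simp add: algebra_simps)
  then have "norm (x - y) \<le> 1/2 * norm (y - x)" using g_lip[of y x] by simp
  then have "norm (x - y) \<le> 1/2 * norm (x - y)" by (simp add: norm_minus_commute)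
  then show "x = y" by simp
qed

lemma g_surj: "surj (\<lambda>x. x + u x)"
proof -
  have "\<exists>x. x + u x = y" for y
  proof -
    have "\<forall>x x'. dist (y - u x) (y - u x') \<le> 1/2 * dist x x'"
      using g_lip by (simp add: dist_norm norm_minus_commute)
    then obtain x where "y - u x = x" using banach_fix_type[of "1/2" "\<lambda>x. y - u x"] by auto
    then show ?thesis by (metis diff_add_cancel)
  qed
  then show ?thesis by (metis surj_def)
qed


lemma psi_right: "psi u y + u (psi u y) = y"
  using surj_f_inv_f[OF g_surj, of y] unfolding psi_def by simp

lemma psi_left: "psi u (x + u x) = x"
  using inv_f_f[OF g_inj] unfolding psi_def by simp

lemma psi_lip: "norm (psi u y - psi u y') \<le> 2 * norm (y - y')"
proof -
  have "psi u y - psi u y' = (y - y') - (u (psi u y) - u (psi u y'))"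
    using psi_right[of y] psi_right[of y'] by (simp add: algebra_simps)
  then have "norm (psi u y - psi u y') \<le> norm (y - y') + 1/2 * norm (psi u y - psi u y')"
    using g_lip[of "psi u y" "psi u y'"] norm_triangle_ineq4[of "y - y'" "u (psi u y) - u (psi u y')"] by simp
  then show ?thesis by simp
qed

lemma psi_cont: "continuous (at y) (psi u)"
proof -
  have "continuous_on UNIV (psi u)"
  proof (rule lipschitz_on_continuous_on)
    show "2-lipschitz_on UNIV (psi u)" using psi_lip by (simp add: lipschitz_on_def dist_norm)
  qed
  then show ?thesis by (simp add: continuous_on_eq_continuous_at)
qed

end

definition Linv :: "('a::euclidean_space \<Rightarrow>\<^sub>L 'a) \<Rightarrow> 'a \<Rightarrow> 'a" where
  "Linv B = inv (\<lambda>h. h + blinfun_apply B h)"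

context fixes B :: "'a::euclidean_space \<Rightarrow>\<^sub>L 'a" assumes B: "norm B \<le> 1/2"
begin

lemma L_lin: "bounded_linear (\<lambda>h. h + blinfun_apply B h)"
  by (intro bounded_linear_add bounded_linear_ident blinfun.bounded_linear_right)

lemma L_inj: "inj (\<lambda>h. h + blinfun_apply B h)"
proof (rule injI)
  fix x y assume "x + blinfun_apply B x = y + blinfun_apply B y"
  then have "x - y = blinfun_apply B (y - x)" by (simp add: algebra_simps blinfun.diff_right)
  then have "norm (x - y) \<le> norm B * norm (y - x)" using norm_blinfun by metis
  also have "\<dots> \<le> 1/2 * norm (x - y)" using mult_right_mono[OF B norm_ge_zero, of "x - y"] by (simp add: norm_minus_commute)
  finally show "x = y" by simp
qed

lemma L_surj: "surj (\<lambda>h. h + blinfun_apply B h)"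
  using linear_inj_imp_surj[OF bounded_linear.linear[OF L_lin] L_inj] .

lemma Linv_lin: "bounded_linear (Linv B)"
  unfolding Linv_def by (rule inj_linear_imp_inv_bounded_linear[OF L_lin L_inj])

lemma Linv_right: "Linv B h + blinfun_apply B (Linv B h) = h"
  using surj_f_inv_f[OF L_surj, of h] unfolding Linv_def by simp

lemma Linv_left: "Linv B (h + blinfun_apply B h) = h"
  using inv_f_f[OF L_inj] unfolding Linv_def by simp

lemma Linv_norm: "norm (Linv B h) \<le> 2 * norm h"
proof -
  have "norm (Linv B h) \<le> norm h + norm (blinfun_apply B (Linv B h))"
    using Linv_right[of h] by (metis add_diff_cancel_right' norm_triangle_ineq4)
  also have "\<dots> \<le> norm h + norm B * norm (Linv B h)" using norm_blinfun by simp
  also have "\<dots> \<le> norm h + 1/2 * norm (Linv B h)" using mult_right_mono[OF B norm_ge_zero, of "Linv B h"] by simp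
  finally show ?thesis by simp
qed

end

lemma Linv_diff:
  fixes B B' :: "'a::euclidean_space \<Rightarrow>\<^sub>L 'a"
  assumes B: "norm B \<le> 1/2" and B': "norm B' \<le> 1/2"
  shows "norm (Linv B h - Linv B' h) \<le> 4 * norm (B - B') * norm h"
proof -
  define k where "k = Linv B h" define k' where "k' = Linv B' h"
  have "k + blinfun_apply B k = k' + blinfun_apply B' k'"
    using Linv_right[OF B, of h] Linv_right[OF B', of h] unfolding k_def k'_def by simp
  then have e: "(k - k') + blinfun_apply B (k - k') = blinfun_apply (B' - B) k'"
    by (simp add: algebra_simps blinfun.diff_right blinfun.diff_left)
  have "norm (k - k') = norm (Linv B ((k - k') + blinfun_apply B (k - k')))"
    using Linv_left[OF B] by simp
  also have "\<dots> \<le> 2 * norm (blinfun_apply (B' - B) k')" using Linv_norm[OF B] e by simp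
  also have "\<dots> \<le> 2 * (norm (B' - B) * norm k')" using norm_blinfun by (intro mult_left_mono) auto
  also have "\<dots> \<le> 2 * (norm (B' - B) * (2 * norm h))"
    using Linv_norm[OF B', of h] unfolding k'_def by (intro mult_left_mono) auto
  finally show ?thesis unfolding k_def k'_def by (simp add: norm_minus_commute)
qed

lemma psi_der:
  fixes u :: "'a::euclidean_space \<Rightarrow> 'a"
  assumes g: "good \<gamma> u"
  shows "(psi u has_derivative Linv (grad u (psi u y))) (at y)"
proof (rule has_derivative_inverse_basic[where f="\<lambda>x. x + u x" and T=UNIV])
  show "((\<lambda>x. x + u x) has_derivative (\<lambda>h. h + blinfun_apply (grad u (psi u y)) h)) (at (psi u y))"
    using g_der[OF g] by (intro derivative_intros) auto
  show "bounded_linear (Linv (grad u (psi u y)))" using Linv_lin g_norm[OF g] by blast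
  show "Linv (grad u (psi u y)) \<circ> (\<lambda>h. h + blinfun_apply (grad u (psi u y)) h) = id"
    using Linv_left g_norm[OF g] by (auto simp: fun_eq_iff)
  show "continuous (at y) (psi u)" using psi_cont[OF g] .
  show "\<And>z. z \<in> UNIV \<Longrightarrow> psi u z + u (psi u z) = z" using psi_right[OF g] by blast
qed auto

lemma has_derivative_from_est:
  fixes f :: "'a::real_normed_vector \<Rightarrow> 'b::real_normed_vector"
  assumes L: "bounded_linear L" and C: "0 \<le> C" and \<gamma>: "0 < \<gamma>"
    and est: "\<And>y. norm (f y - f x - L (y - x)) \<le> C * norm (y - x) powr \<gamma> * norm (y - x)"
  shows "(f has_derivative L) (at x)"
  unfolding has_derivative_at_alt
proof (intro conjI allI impI L)
  fix e :: real assume e: "0 < e"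
  define d where "d = (e / (C + 1)) powr (1/\<gamma>)"
  have d: "0 < d" unfolding d_def using e C by simp
  have dg: "d powr \<gamma> = e / (C + 1)" unfolding d_def using e C \<gamma> by (simp add: powr_powr)
  show "\<exists>d>0. \<forall>y. norm (y - x) < d \<longrightarrow> norm (f y - f x - L (y - x)) \<le> e * norm (y - x)"
  proof (intro exI[of _ d] conjI allI impI d)
    fix y assume y: "norm (y - x) < d"
    have "norm (y - x) powr \<gamma> \<le> e / (C + 1)" using powr_less_mono2[OF \<gamma> norm_ge_zero y] dg by simp
    then have "C * norm (y - x) powr \<gamma> \<le> C * (e / (C + 1))" using C by (intro mult_left_mono) auto
    also have "\<dots> \<le> e" using C e by (simp add: field_simps)
    finally have "C * norm (y - x) powr \<gamma> * norm (y - x) \<le> e * norm (y - x)"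
      by (intro mult_right_mono) auto
    then show "norm (f y - f x - L (y - x)) \<le> e * norm (y - x)" using est[of y] by linarith
  qed
qed

definition Gi :: "'a measure \<Rightarrow> 'a set \<Rightarrow> ('a \<Rightarrow> 'a::euclidean_space) \<Rightarrow> 'a \<Rightarrow> 'a" where
  "Gi \<nu> A u x = (LINT z:A|\<nu>. u (x + z) - u x)"

definition Li :: "'a measure \<Rightarrow> 'a set \<Rightarrow> ('a \<Rightarrow> 'a::euclidean_space) \<Rightarrow> 'a \<Rightarrow> 'a \<Rightarrow> 'a" where
  "Li \<nu> A u x h = (LINT z:A|\<nu>. blinfun_apply (grad u (x + z)) h - blinfun_apply (grad u x) h)"

context
  fixes \<gamma> :: real and u :: "'a::euclidean_space \<Rightarrow> 'a"
  assumes g: "good \<gamma> u" and \<gamma>: "0 < \<gamma>"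
begin

lemma m_u: "(\<lambda>z. u (x + z) - u x) \<in> borel_measurable borel"
proof (rule borel_measurable_continuous_onI)
  have "continuous_on UNIV (\<lambda>z. u (x + z))"
    by (rule continuous_on_compose2[OF g_cont_u[OF g]]) (auto intro: continuous_intros)
  then show "continuous_on UNIV (\<lambda>z. u (x + z) - u x)" by (auto intro: continuous_intros)
qed

lemma c_gu: "continuous_on UNIV (\<lambda>z. grad u (x + z))"
  by (rule continuous_on_compose2[OF g_cont[OF g]]) (auto intro: continuous_intros)

lemma m_gu: "(\<lambda>z. blinfun_apply (grad u (x + z)) h - blinfun_apply (grad u x') h') \<in> borel_measurable borel"
proof (rule borel_measurable_continuous_onI)
  show "continuous_on UNIV (\<lambda>z. blinfun_apply (grad u (x + z)) h - blinfun_apply (grad u x') h')"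
    using c_gu[of x] by (auto intro!: continuous_intros)
qed

lemma m_u1: "(\<lambda>z. u (x + z)) \<in> borel_measurable borel"
  by (rule borel_measurable_continuous_onI, rule continuous_on_compose2[OF g_cont_u[OF g]]) (auto intro: continuous_intros)

lemma m_g1: "(\<lambda>z. blinfun_apply (grad u (x + z)) h) \<in> borel_measurable borel"
  by (rule borel_measurable_continuous_onI) (use c_gu[of x] in \<open>auto intro!: continuous_intros\<close>)

lemma pt_est:
  "norm (u (y + z) - u y - (u (x + z) - u x) - (blinfun_apply (grad u (x + z)) (y - x) - blinfun_apply (grad u x) (y - x)))
     \<le> norm (y - x) powr \<gamma> * norm (y - x)"
proof -
  define \<phi> where "\<phi> w = u (w + z) - u w - (blinfun_apply (grad u (x + z)) w - blinfun_apply (grad u x) w)" for w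
  define D where "D w = grad u (w + z) - grad u w - (grad u (x + z) - grad u x)" for w
  have der: "(\<phi> has_derivative blinfun_apply (D w)) (at w within closed_segment x y)" for w
  proof -
    have "((\<lambda>w. u (w + z)) has_derivative (\<lambda>h. blinfun_apply (grad u (w + z)) h)) (at w)"
      using has_derivative_compose[of "\<lambda>w. w + z" "\<lambda>h. h" w UNIV u, OF _ g_der[OF g]]
        has_derivative_add_const[OF has_derivative_ident, of z "at w"] by simp
    then have "(\<phi> has_derivative (\<lambda>h. blinfun_apply (grad u (w + z)) h - blinfun_apply (grad u w) h
        - (blinfun_apply (grad u (x + z)) h - blinfun_apply (grad u x) h))) (at w)"
      unfolding \<phi>_def
      by (intro derivative_intros g_der[OF g] bounded_linear_imp_has_derivative blinfun.bounded_linear_right) auto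
    moreover have "blinfun_apply (D w) = (\<lambda>h. blinfun_apply (grad u (w + z)) h - blinfun_apply (grad u w) h
        - (blinfun_apply (grad u (x + z)) h - blinfun_apply (grad u x) h))"
      by (simp add: D_def fun_eq_iff blinfun.diff_left)
    ultimately show ?thesis by (simp add: has_derivative_at_withinI)
  qed
  have bnd: "onorm (blinfun_apply (D w)) \<le> norm (y - x) powr \<gamma>" if w: "w \<in> closed_segment x y" for w
  proof -
    have dw: "dist w x powr \<gamma> \<le> norm (y - x) powr \<gamma>"
      using segment_bound1[OF w] \<gamma> by (intro powr_mono2) (auto simp: dist_norm)
    have "norm (D w) \<le> norm (grad u (w + z) - grad u (x + z)) + norm (grad u w - grad u x)"
    proof -
      have "D w = (grad u (w + z) - grad u (x + z)) - (grad u w - grad u x)"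
        unfolding D_def by (simp add: algebra_simps)
      then show ?thesis using norm_triangle_ineq4 by metis
    qed
    also have "\<dots> \<le> 1/2 * dist w x powr \<gamma> + 1/2 * dist w x powr \<gamma>"
      using g_hol[OF g, of "w + z" "x + z"] g_hol[OF g, of w x] by (simp add: dist_norm)
    also have "\<dots> \<le> norm (y - x) powr \<gamma>" using dw by simp
    finally show ?thesis by (simp add: norm_blinfun.rep_eq)
  qed
  have "norm (\<phi> y - \<phi> x) \<le> norm (y - x) powr \<gamma> * norm (y - x)"
    by (rule differentiable_bound[OF convex_closed_segment der bnd]) auto
  moreover have "\<phi> y - \<phi> x = u (y + z) - u y - (u (x + z) - u x) - (blinfun_apply (grad u (x + z)) (y - x) - blinfun_apply (grad u x) (y - x))"
    unfolding \<phi>_def by (simp add: blinfun.diff_right algebra_simps)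
  ultimately show ?thesis by simp
qed

end

context lev begin
context
  fixes \<gamma> :: real and u :: "'a \<Rightarrow> 'a"
  assumes g: "good \<gamma> u" and \<gamma>: "0 < \<gamma>"
begin

lemma mA: "0 \<le> measure \<nu> A" by simp

lemma Li_bound: "norm (Li \<nu> A u x h) \<le> measure \<nu> A * norm h"
proof -
  have "norm (Li \<nu> A u x h) \<le> norm h * measure \<nu> A"
    unfolding Li_def
  proof (rule LINT_bound[OF m_gu[OF g \<gamma>]])
    fix z
    have "norm (blinfun_apply (grad u (x + z)) h - blinfun_apply (grad u x) h)
        \<le> norm (grad u (x + z)) * norm h + norm (grad u x) * norm h"
      by (metis (no_types, opaque_lifting) add_mono norm_blinfun norm_triangle_ineq4 order_trans)
    also have "\<dots> \<le> 1/2 * norm h + 1/2 * norm h"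
      using g_norm[OF g] by (intro add_mono mult_right_mono) auto
    finally show "norm (blinfun_apply (grad u (x + z)) h - blinfun_apply (grad u x) h) \<le> norm h" by simp
  qed simp
  then show ?thesis by (simp add: mult.commute)
qed

lemma Li_si: "set_integrable \<nu> A (\<lambda>z. blinfun_apply (grad u (x + z)) h - blinfun_apply (grad u x) h)"
proof (rule si_bound[OF m_gu[OF g \<gamma>]])
  fix z
  have "norm (blinfun_apply (grad u (x + z)) h - blinfun_apply (grad u x) h)
      \<le> norm (grad u (x + z)) * norm h + norm (grad u x) * norm h"
    by (metis (no_types, opaque_lifting) add_mono norm_blinfun norm_triangle_ineq4 order_trans)
  also have "\<dots> \<le> 1/2 * norm h + 1/2 * norm h"
    using g_norm[OF g] by (intro add_mono mult_right_mono) auto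
  finally show "norm (blinfun_apply (grad u (x + z)) h - blinfun_apply (grad u x) h) \<le> norm h" by simp
qed

lemma Li_lin: "bounded_linear (Li \<nu> A u x)"
proof (rule bounded_linear_intro)
  fix h k
  have "Li \<nu> A u x (h + k) = (LINT z:A|\<nu>. (blinfun_apply (grad u (x + z)) h - blinfun_apply (grad u x) h)
      + (blinfun_apply (grad u (x + z)) k - blinfun_apply (grad u x) k))"
    unfolding Li_def by (simp add: blinfun.add_right algebra_simps)
  also have "\<dots> = Li \<nu> A u x h + Li \<nu> A u x k"
    unfolding Li_def by (rule set_integral_add(2)[OF Li_si Li_si])
  finally show "Li \<nu> A u x (h + k) = Li \<nu> A u x h + Li \<nu> A u x k" .
next
  fix r :: real and h
  have "Li \<nu> A u x (r *\<^sub>R h) = (LINT z:A|\<nu>. r *\<^sub>R (blinfun_apply (grad u (x + z)) h - blinfun_apply (grad u x) h))"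
    unfolding Li_def by (simp add: blinfun.scaleR_right algebra_simps)
  also have "\<dots> = r *\<^sub>R Li \<nu> A u x h" unfolding Li_def by simp
  finally show "Li \<nu> A u x (r *\<^sub>R h) = r *\<^sub>R Li \<nu> A u x h" .
next
  fix h show "norm (Li \<nu> A u x h) \<le> norm h * measure \<nu> A" using Li_bound by (simp add: mult.commute)
qed

lemma Li_hol: "norm (Li \<nu> A u x h - Li \<nu> A u x' h) \<le> measure \<nu> A * (dist x x' powr \<gamma> * norm h)"
proof -
  have "Li \<nu> A u x h - Li \<nu> A u x' h = (LINT z:A|\<nu>. (blinfun_apply (grad u (x + z)) h - blinfun_apply (grad u x) h)
      - (blinfun_apply (grad u (x' + z)) h - blinfun_apply (grad u x') h))"
    unfolding Li_def by (rule set_integral_diff(2)[OF Li_si Li_si, symmetric])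
  also have "norm \<dots> \<le> (dist x x' powr \<gamma> * norm h) * measure \<nu> A"
  proof (rule LINT_bound)
    show "(\<lambda>z. (blinfun_apply (grad u (x + z)) h - blinfun_apply (grad u x) h)
      - (blinfun_apply (grad u (x' + z)) h - blinfun_apply (grad u x') h)) \<in> borel_measurable borel"
      by (intro borel_measurable_diff m_g1[OF g \<gamma>] borel_measurable_const)
    fix z
    have e: "(blinfun_apply (grad u (x + z)) h - blinfun_apply (grad u x) h)
      - (blinfun_apply (grad u (x' + z)) h - blinfun_apply (grad u x') h)
      = blinfun_apply (grad u (x + z) - grad u (x' + z)) h - blinfun_apply (grad u x - grad u x') h"
      by (simp add: blinfun.diff_left algebra_simps)
    have "norm (blinfun_apply (grad u (x + z) - grad u (x' + z)) h - blinfun_apply (grad u x - grad u x') h)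
      \<le> norm (grad u (x + z) - grad u (x' + z)) * norm h + norm (grad u x - grad u x') * norm h"
      by (metis (no_types, opaque_lifting) add_mono norm_blinfun norm_triangle_ineq4 order_trans)
    also have "\<dots> \<le> (1/2 * dist x x' powr \<gamma>) * norm h + (1/2 * dist x x' powr \<gamma>) * norm h"
      using g_hol[OF g, of "x + z" "x' + z"] g_hol[OF g, of x x']
      by (intro add_mono mult_right_mono) (auto simp: dist_norm)
    finally show "norm ((blinfun_apply (grad u (x + z)) h - blinfun_apply (grad u x) h)
      - (blinfun_apply (grad u (x' + z)) h - blinfun_apply (grad u x') h)) \<le> dist x x' powr \<gamma> * norm h"
      unfolding e by (simp add: mult.commute)
  qed simp
  finally show ?thesis by (simp add: mult.commute)
qed

lemma Gi_si: "set_integrable \<nu> A (\<lambda>z. u (x + z) - u x)" if M: "\<And>x. norm (u x) \<le> M" for M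
proof (rule si_bound[OF m_u[OF g \<gamma>]])
  fix z show "norm (u (x + z) - u x) \<le> M + M"
    using M[of "x + z"] M[of x] norm_triangle_ineq4 order_trans add_mono by metis
qed

lemma Gi_bound: "norm (Gi \<nu> A u x) \<le> 2 * M * measure \<nu> A" if M: "\<And>x. norm (u x) \<le> M" for M
proof -
  have M0: "0 \<le> M" using M[of 0] norm_ge_zero order_trans by blast
  have "norm (Gi \<nu> A u x) \<le> (M + M) * measure \<nu> A"
    unfolding Gi_def
  proof (rule LINT_bound[OF m_u[OF g \<gamma>]])
    fix z show "norm (u (x + z) - u x) \<le> M + M"
      using M[of "x + z"] M[of x] norm_triangle_ineq4 order_trans add_mono by metis
  qed (use M0 in simp)
  then show ?thesis by simp
qed

lemma Gi_der: "(Gi \<nu> A u has_derivative Li \<nu> A u x) (at x)" if M: "\<And>x. norm (u x) \<le> M" for M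
proof (rule has_derivative_from_est[OF Li_lin mA \<gamma>])
  fix y
  have "Gi \<nu> A u y - Gi \<nu> A u x - Li \<nu> A u x (y - x) =
    (LINT z:A|\<nu>. (u (y + z) - u y) - (u (x + z) - u x) - (blinfun_apply (grad u (x + z)) (y - x) - blinfun_apply (grad u x) (y - x)))"
    unfolding Gi_def Li_def
    by (subst set_integral_diff(2)[OF set_integral_diff(1)[OF Gi_si[OF M] Gi_si[OF M]] Li_si])
       (simp add: set_integral_diff(2)[OF Gi_si[OF M] Gi_si[OF M]])
  also have "norm \<dots> \<le> (norm (y - x) powr \<gamma> * norm (y - x)) * measure \<nu> A"
  proof (rule LINT_bound)
    show "(\<lambda>z. (u (y + z) - u y) - (u (x + z) - u x) - (blinfun_apply (grad u (x + z)) (y - x) - blinfun_apply (grad u x) (y - x)))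
       \<in> borel_measurable borel"
      by (intro borel_measurable_diff m_g1[OF g \<gamma>] m_u1[OF g \<gamma>] borel_measurable_const)
  qed (use pt_est[OF g \<gamma>] in auto)
  finally show "norm (Gi \<nu> A u y - Gi \<nu> A u x - Li \<nu> A u x (y - x)) \<le> measure \<nu> A * norm (y - x) powr \<gamma> * norm (y - x)"
    by (simp add: mult_ac)
qed

end
end

definition af :: "'a measure \<Rightarrow> 'a set \<Rightarrow> 'a \<Rightarrow> real \<Rightarrow> ('a \<Rightarrow> 'a::euclidean_space) \<Rightarrow> 'a \<Rightarrow> 'a" where
  "af \<nu> A \<eta> lam v y = \<eta> + lam *\<^sub>R v (psi v y) - Gi \<nu> A v (psi v y)"

definition Kf :: "'a measure \<Rightarrow> 'a set \<Rightarrow> real \<Rightarrow> ('a \<Rightarrow> 'a::euclidean_space) \<Rightarrow> 'a \<Rightarrow> 'a \<Rightarrow> 'a" where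
  "Kf \<nu> A lam v x h = lam *\<^sub>R blinfun_apply (grad v x) h - Li \<nu> A v x h"

definition Da :: "'a measure \<Rightarrow> 'a set \<Rightarrow> real \<Rightarrow> ('a \<Rightarrow> 'a::euclidean_space) \<Rightarrow> 'a \<Rightarrow> 'a \<Rightarrow> 'a" where
  "Da \<nu> A lam v y h = Kf \<nu> A lam v (psi v y) (Linv (grad v (psi v y)) h)"

context lev begin
context
  fixes \<gamma> lam M :: real and v :: "'a \<Rightarrow> 'a"
  assumes g: "good \<gamma> v" and \<gamma>: "0 < \<gamma>" "\<gamma> < 1" and lam: "0 \<le> lam" and M: "\<And>x. norm (v x) \<le> M"
begin

abbreviation "c1 \<equiv> lam / 2 + measure \<nu> A"

lemma c1_nn: "0 \<le> c1" using lam by simp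

lemma Kf_lin: "bounded_linear (Kf \<nu> A lam v x)"
proof -
  have "bounded_linear (\<lambda>h. lam *\<^sub>R blinfun_apply (grad v x) h)"
    using bounded_linear_compose[OF bounded_linear_scaleR_right[of lam] blinfun.bounded_linear_right[of "grad v x"]] by simp
  then show ?thesis unfolding Kf_def[abs_def] by (intro bounded_linear_sub Li_lin[OF g \<gamma>(1)])
qed

lemma Kf_bound: "norm (Kf \<nu> A lam v x h) \<le> c1 * norm h"
proof -
  have "norm (Kf \<nu> A lam v x h) \<le> lam * norm (blinfun_apply (grad v x) h) + norm (Li \<nu> A v x h)"
    unfolding Kf_def using lam by (metis abs_of_nonneg norm_scaleR norm_triangle_ineq4)
  also have "\<dots> \<le> lam * (1/2 * norm h) + measure \<nu> A * norm h"
  proof (intro add_mono mult_left_mono lam Li_bound[OF g \<gamma>(1)])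
    show "norm (blinfun_apply (grad v x) h) \<le> 1/2 * norm h"
      using norm_blinfun[of "grad v x" h] g_norm[OF g, of x] by (meson mult_right_mono norm_ge_zero order_trans)
  qed
  finally show ?thesis by (simp add: algebra_simps)
qed

lemma Kf_hol: "norm (Kf \<nu> A lam v x h - Kf \<nu> A lam v x' h) \<le> c1 * (dist x x' powr \<gamma> * norm h)"
proof -
  have e: "Kf \<nu> A lam v x h - Kf \<nu> A lam v x' h = lam *\<^sub>R blinfun_apply (grad v x - grad v x') h - (Li \<nu> A v x h - Li \<nu> A v x' h)"
    unfolding Kf_def by (simp add: blinfun.diff_left algebra_simps)
  have "norm (Kf \<nu> A lam v x h - Kf \<nu> A lam v x' h) \<le> lam * norm (blinfun_apply (grad v x - grad v x') h) + norm (Li \<nu> A v x h - Li \<nu> A v x' h)"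
    unfolding e using lam by (metis abs_of_nonneg norm_scaleR norm_triangle_ineq4)
  also have "\<dots> \<le> lam * (1/2 * (dist x x' powr \<gamma> * norm h)) + measure \<nu> A * (dist x x' powr \<gamma> * norm h)"
  proof (intro add_mono mult_left_mono lam Li_hol[OF g \<gamma>(1)])
    have "norm (blinfun_apply (grad v x - grad v x') h) \<le> norm (grad v x - grad v x') * norm h" by (rule norm_blinfun)
    also have "\<dots> \<le> (1/2 * dist x x' powr \<gamma>) * norm h" using g_hol[OF g] by (intro mult_right_mono) auto
    finally show "norm (blinfun_apply (grad v x - grad v x') h) \<le> 1/2 * (dist x x' powr \<gamma> * norm h)" by simp
  qed
  finally show ?thesis by (simp add: algebra_simps)
qed

lemma af_der: "(af \<nu> A \<eta> lam v has_derivative Da \<nu> A lam v y) (at y)"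
proof -
  have H: "((\<lambda>x. lam *\<^sub>R v x - Gi \<nu> A v x) has_derivative Kf \<nu> A lam v x) (at x)" for x
  proof -
    have "((\<lambda>x. lam *\<^sub>R v x - Gi \<nu> A v x) has_derivative (\<lambda>h. lam *\<^sub>R blinfun_apply (grad v x) h - Li \<nu> A v x h)) (at x)"
      by (intro derivative_intros g_der[OF g] Gi_der[OF g \<gamma>(1) M])
    then show ?thesis unfolding Kf_def[abs_def] by simp
  qed
  have "((\<lambda>y. lam *\<^sub>R v (psi v y) - Gi \<nu> A v (psi v y)) has_derivative Da \<nu> A lam v y) (at y)"
    unfolding Da_def[abs_def]
    using has_derivative_compose[OF psi_der[OF g, of y, THEN has_derivative_at_withinI[where s=UNIV]] H] by simp
  note d1 = this
  have "((\<lambda>y. \<eta> + (lam *\<^sub>R v (psi v y) - Gi \<nu> A v (psi v y))) has_derivative Da \<nu> A lam v y) (at y)"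
    using has_derivative_add[OF has_derivative_const d1] by simp
  then show ?thesis unfolding af_def[abs_def] by (simp add: algebra_simps)
qed

lemma Da_lin: "bounded_linear (Da \<nu> A lam v y)"
  using has_derivative_bounded_linear[OF af_der] .

lemma grad_af: "blinfun_apply (grad (af \<nu> A \<eta> lam v) y) = Da \<nu> A lam v y"
  unfolding grad_def using frechet_derivative_at[OF af_der, symmetric] bounded_linear_Blinfun_apply[OF Da_lin]
  by simp

lemma Da_bound: "norm (Da \<nu> A lam v y h) \<le> 2 * c1 * norm h"
proof -
  have "norm (Da \<nu> A lam v y h) \<le> c1 * norm (Linv (grad v (psi v y)) h)" unfolding Da_def by (rule Kf_bound)
  also have "\<dots> \<le> c1 * (2 * norm h)" using Linv_norm[OF g_norm[OF g]] c1_nn by (intro mult_left_mono) auto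
  finally show ?thesis by (simp only: mult_ac)
qed

lemma Da_hol: "norm (Da \<nu> A lam v y h - Da \<nu> A lam v y' h) \<le> 8 * c1 * (dist y y' powr \<gamma> * norm h)"
proof -
  define x where "x = psi v y" define x' where "x' = psi v y'"
  define P where "P = Linv (grad v x) h" define P' where "P' = Linv (grad v x') h"
  have Pn: "norm P \<le> 2 * norm h" unfolding P_def using Linv_norm[OF g_norm[OF g]] by blast
  have PP: "norm (P - P') \<le> 4 * norm (grad v x - grad v x') * norm h" unfolding P_def P'_def
    using Linv_diff[OF g_norm[OF g] g_norm[OF g]] by blast
  have dx: "dist x x' powr \<gamma> \<le> 2 * dist y y' powr \<gamma>"
  proof -
    have "dist x x' \<le> 2 * dist y y'" unfolding x_def x'_def dist_norm using psi_lip[OF g] .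
    then have "dist x x' powr \<gamma> \<le> (2 * dist y y') powr \<gamma>" using \<gamma> by (intro powr_mono2) auto
    also have "\<dots> = 2 powr \<gamma> * dist y y' powr \<gamma>" by (simp add: powr_mult)
    also have "\<dots> \<le> 2 * dist y y' powr \<gamma>"
    proof (intro mult_right_mono)
      show "2 powr \<gamma> \<le> 2" using powr_mono[of \<gamma> 1 2] \<gamma> by simp
    qed simp
    finally show ?thesis .
  qed
  have "Da \<nu> A lam v y h - Da \<nu> A lam v y' h = (Kf \<nu> A lam v x P - Kf \<nu> A lam v x' P) + Kf \<nu> A lam v x' (P - P')"
    unfolding Da_def x_def x'_def P_def P'_def using linear_diff[OF bounded_linear.linear[OF Kf_lin]] by simp
  also have "norm \<dots> \<le> c1 * (dist x x' powr \<gamma> * norm P) + c1 * norm (P - P')"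
    by (rule order_trans[OF norm_triangle_ineq add_mono[OF Kf_hol Kf_bound]])
  also have "\<dots> \<le> c1 * (dist x x' powr \<gamma> * (2 * norm h)) + c1 * (4 * (1/2 * dist x x' powr \<gamma>) * norm h)"
  proof (rule add_mono; rule mult_left_mono[OF _ c1_nn])
    show "dist x x' powr \<gamma> * norm P \<le> dist x x' powr \<gamma> * (2 * norm h)" using Pn by (intro mult_left_mono) auto
    show "norm (P - P') \<le> 4 * (1 / 2 * dist x x' powr \<gamma>) * norm h"
    proof -
      have "4 * norm (grad v x - grad v x') * norm h \<le> 4 * (1 / 2 * dist x x' powr \<gamma>) * norm h"
        using g_hol[OF g, of x x'] by (intro mult_right_mono) auto
      then show ?thesis using PP by linarith
    qed
  qed
  also have "\<dots> = 4 * c1 * (dist x x' powr \<gamma> * norm h)" by (simp add: algebra_simps)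
  also have "\<dots> \<le> 4 * c1 * ((2 * dist y y' powr \<gamma>) * norm h)"
    using dx c1_nn by (intro mult_left_mono mult_right_mono) auto
  finally show ?thesis by (simp add: algebra_simps)
qed

lemma af_holder: "holder_norm_le \<gamma> (grad (af \<nu> A \<eta> lam v)) (10 * c1)"
proof -
  have 1: "norm (grad (af \<nu> A \<eta> lam v) y) \<le> 2 * c1" for y
  proof (rule norm_blinfun_bound)
    show "0 \<le> 2 * c1" using c1_nn by simp
    fix h show "norm (blinfun_apply (grad (af \<nu> A \<eta> lam v) y) h) \<le> 2 * c1 * norm h"
      unfolding grad_af by (rule Da_bound)
  qed
  have 2: "norm (grad (af \<nu> A \<eta> lam v) y - grad (af \<nu> A \<eta> lam v) y') \<le> 8 * c1 * dist y y' powr \<gamma>" for y y'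
  proof (rule norm_blinfun_bound)
    show "0 \<le> 8 * c1 * dist y y' powr \<gamma>" using c1_nn by simp
    fix h show "norm (blinfun_apply (grad (af \<nu> A \<eta> lam v) y - grad (af \<nu> A \<eta> lam v) y') h) \<le> 8 * c1 * dist y y' powr \<gamma> * norm h"
      unfolding blinfun.diff_left grad_af using Da_hol[of y h y'] by (simp only: mult_ac)
  qed
  have 3: "2 * c1 + 8 * c1 \<le> 10 * c1" by simp
  show ?thesis unfolding holder_norm_le_def using 1 2 3 by blast
qed

lemma af_bound: "norm (af \<nu> A \<eta> lam v y) \<le> norm \<eta> + lam * M + 2 * M * measure \<nu> A"
proof -
  have "norm (af \<nu> A \<eta> lam v y) \<le> norm \<eta> + norm (lam *\<^sub>R v (psi v y)) + norm (Gi \<nu> A v (psi v y))"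
    unfolding af_def
    using norm_triangle_ineq[of \<eta> "lam *\<^sub>R v (psi v y)"] norm_triangle_ineq4[of "\<eta> + lam *\<^sub>R v (psi v y)" "Gi \<nu> A v (psi v y)"]
    by linarith
  also have "\<dots> \<le> norm \<eta> + lam * M + 2 * M * measure \<nu> A"
    using lam M Gi_bound[OF g \<gamma>(1) M] by (intro add_mono) (auto intro: mult_left_mono)
  finally show ?thesis .
qed

end
end

definition enf :: "'a measure \<Rightarrow> 'a set \<Rightarrow> ('a \<Rightarrow> 'a::euclidean_space) \<Rightarrow> ('a \<Rightarrow> 'a) \<Rightarrow> 'a \<Rightarrow> 'a \<Rightarrow> real" where
  "enf \<nu> A v w x x0 = (LINT z:A|\<nu>. norm (grad v (x + z) - grad w (x0 + z)))"

lemma tend_bound: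
  fixes f :: "nat \<Rightarrow> 'b::real_normed_vector"
  assumes "\<And>n. norm (f n - l) \<le> g n" "g \<longlonglongrightarrow> 0"
  shows "f \<longlonglongrightarrow> l"
proof -
  have "(\<lambda>n. f n - l) \<longlonglongrightarrow> 0" by (rule Lim_null_comparison[of _ g, OF always_eventually]) (use assms in blast)+
  then show ?thesis by (rule LIM_zero_cancel)
qed

context lev begin

lemma set_DCT:
  fixes s :: "nat \<Rightarrow> 'a \<Rightarrow> 'b::{banach,second_countable_topology}"
  assumes f: "f \<in> borel_measurable borel" and s: "\<And>i. s i \<in> borel_measurable borel"
    and lim: "\<And>z. z \<in> A \<Longrightarrow> (\<lambda>i. s i z) \<longlonglongrightarrow> f z"
    and bnd: "\<And>i z. z \<in> A \<Longrightarrow> norm (s i z) \<le> c"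
  shows "(\<lambda>i. LINT z:A|\<nu>. s i z) \<longlonglongrightarrow> (LINT z:A|\<nu>. f z)"
  unfolding set_lebesgue_integral_def
proof (rule integral_dominated_convergence[where w="\<lambda>z. indicator A z * c"])
  show "(\<lambda>x. indicator A x *\<^sub>R f x) \<in> borel_measurable \<nu>"
    using meas[OF f] A_nu by (intro borel_measurable_scaleR borel_measurable_indicator) auto
  show "(\<lambda>x. indicator A x *\<^sub>R s i x) \<in> borel_measurable \<nu>" for i
    using meas[OF s] A_nu by (intro borel_measurable_scaleR borel_measurable_indicator) auto
  show "integrable \<nu> (\<lambda>x. indicator A x * c)"
    using integrable_real_indicator[OF A_nu A_fin] by simp
  show "AE x in \<nu>. (\<lambda>i. indicator A x *\<^sub>R s i x) \<longlonglongrightarrow> indicator A x *\<^sub>R f x"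
  proof (intro AE_I2)
    fix x show "(\<lambda>i. indicator A x *\<^sub>R s i x) \<longlonglongrightarrow> indicator A x *\<^sub>R f x"
      by (cases "x \<in> A") (simp_all add: lim)
  qed
  show "AE x in \<nu>. norm (indicator A x *\<^sub>R s i x) \<le> indicator A x * c" for i
    using bnd by (intro AE_I2) (auto simp: indicator_def)
qed

context
  fixes \<gamma> lam M :: real and v :: "nat \<Rightarrow> 'a \<Rightarrow> 'a" and w :: "'a \<Rightarrow> 'a" and y :: 'a
  assumes gv: "\<And>n. good \<gamma> (v n)" and gw: "good \<gamma> w" and \<gamma>: "0 < \<gamma>" "\<gamma> < 1" and lam: "0 \<le> lam"
    and Mv: "\<And>n x. norm (v n x) \<le> M" and Mw: "\<And>x. norm (w x) \<le> M"
    and cu: "\<And>x. (\<lambda>n. v n x) \<longlonglongrightarrow> w x" and cg: "\<And>x. (\<lambda>n. grad (v n) x) \<longlonglongrightarrow> grad w x"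
begin

abbreviation "xn n \<equiv> psi (v n) y"
abbreviation "x0 \<equiv> psi w y"

lemma xn_bound: "norm (xn n - x0) \<le> 2 * norm (v n x0 - w x0)"
proof -
  have "xn n - x0 = (w x0 - v n x0) + (v n x0 - v n (xn n))"
    using psi_right[OF gv[of n], of y] psi_right[OF gw, of y] by (simp add: algebra_simps)
  then have "norm (xn n - x0) \<le> norm (w x0 - v n x0) + norm (v n x0 - v n (xn n))"
    by (simp only: norm_triangle_ineq)
  moreover have "norm (v n x0 - v n (xn n)) \<le> 1/2 * norm (xn n - x0)"
    using g_lip[OF gv[of n], of x0 "xn n"] by (simp add: norm_minus_commute)
  moreover have "norm (w x0 - v n x0) = norm (v n x0 - w x0)" by (rule norm_minus_commute)
  ultimately show ?thesis by linarith
qed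

lemma xn_lim: "(\<lambda>n. norm (xn n - x0)) \<longlonglongrightarrow> 0"
proof (rule tend_bound)
  show "norm (norm (xn n - x0) - 0) \<le> 2 * norm (v n x0 - w x0)" for n using xn_bound by simp
  have "(\<lambda>n. v n x0 - w x0) \<longlonglongrightarrow> 0" using cu[of x0] by (rule LIM_zero)
  then show "(\<lambda>n. 2 * norm (v n x0 - w x0)) \<longlonglongrightarrow> 0"
    using tendsto_mult_right_zero tendsto_norm_zero by blast
qed

lemma vshift_lim: "(\<lambda>n. v n (xn n + z)) \<longlonglongrightarrow> w (x0 + z)"
proof (rule tend_bound)
  show "norm (v n (xn n + z) - w (x0 + z)) \<le> 1/2 * norm (xn n - x0) + norm (v n (x0 + z) - w (x0 + z))" for n
  proof -
    have "norm (v n (xn n + z) - w (x0 + z)) \<le> norm (v n (xn n + z) - v n (x0 + z)) + norm (v n (x0 + z) - w (x0 + z))"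
      using norm_triangle_ineq[of "v n (xn n + z) - v n (x0 + z)" "v n (x0 + z) - w (x0 + z)"] by simp
    then show ?thesis using g_lip[OF gv[of n], of "xn n + z" "x0 + z"] by simp
  qed
  have "(\<lambda>n. v n (x0 + z) - w (x0 + z)) \<longlonglongrightarrow> 0" using cu[of "x0 + z"] by (rule LIM_zero)
  then have "(\<lambda>n. norm (v n (x0 + z) - w (x0 + z))) \<longlonglongrightarrow> 0" using tendsto_norm_zero by blast
  note t = this
  show "(\<lambda>n. 1/2 * norm (xn n - x0) + norm (v n (x0 + z) - w (x0 + z))) \<longlonglongrightarrow> 0"
    using tendsto_add[OF tendsto_mult_right_zero[OF xn_lim, of "1/2"] t] by simp
qed

lemma gshift_bound: "norm (grad (v n) (xn n + z) - grad w (x0 + z)) \<le> 1/2 * norm (xn n - x0) powr \<gamma> + norm (grad (v n) (x0 + z) - grad w (x0 + z))"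
proof -
  have "norm (grad (v n) (xn n + z) - grad w (x0 + z)) \<le> norm (grad (v n) (xn n + z) - grad (v n) (x0 + z)) + norm (grad (v n) (x0 + z) - grad w (x0 + z))"
    using norm_triangle_ineq[of "grad (v n) (xn n + z) - grad (v n) (x0 + z)" "grad (v n) (x0 + z) - grad w (x0 + z)"] by simp
  then show ?thesis using g_hol[OF gv[of n], of "xn n + z" "x0 + z"] by (simp add: dist_norm)
qed

lemma powr_lim: "(\<lambda>n. norm (xn n - x0) powr \<gamma>) \<longlonglongrightarrow> 0"
  by (rule tendsto_zero_powrI[OF xn_lim tendsto_const]) (use \<gamma> in auto)

lemma gshift_lim: "(\<lambda>n. norm (grad (v n) (xn n + z) - grad w (x0 + z))) \<longlonglongrightarrow> 0"
proof (rule tend_bound)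
  show "norm (norm (grad (v n) (xn n + z) - grad w (x0 + z)) - 0) \<le> 1/2 * norm (xn n - x0) powr \<gamma> + norm (grad (v n) (x0 + z) - grad w (x0 + z))" for n
    using gshift_bound by simp
  have "(\<lambda>n. grad (v n) (x0 + z) - grad w (x0 + z)) \<longlonglongrightarrow> 0" using cg[of "x0 + z"] by (rule LIM_zero)
  then have "(\<lambda>n. norm (grad (v n) (x0 + z) - grad w (x0 + z))) \<longlonglongrightarrow> 0" using tendsto_norm_zero by blast
  note t = this
  show "(\<lambda>n. 1/2 * norm (xn n - x0) powr \<gamma> + norm (grad (v n) (x0 + z) - grad w (x0 + z))) \<longlonglongrightarrow> 0"
    using tendsto_add[OF tendsto_mult_right_zero[OF powr_lim, of "1/2"] t] by simp
qed

lemma Gi_lim: "(\<lambda>n. Gi \<nu> A (v n) (xn n)) \<longlonglongrightarrow> Gi \<nu> A w x0"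
  unfolding Gi_def
proof (rule set_DCT[where c="M + M"])
  show "(\<lambda>z. w (x0 + z) - w x0) \<in> borel_measurable borel" by (rule m_u[OF gw \<gamma>(1)])
  show "(\<lambda>z. v i (xn i + z) - v i (xn i)) \<in> borel_measurable borel" for i by (rule m_u[OF gv \<gamma>(1)])
  show "(\<lambda>i. v i (xn i + z) - v i (xn i)) \<longlonglongrightarrow> w (x0 + z) - w x0" for z
    using vshift_lim[of z] vshift_lim[of 0] by (intro tendsto_diff) auto
  show "norm (v i (xn i + z) - v i (xn i)) \<le> M + M" for i z
    using Mv[of i "xn i + z"] Mv[of i "xn i"] norm_triangle_ineq4 order_trans add_mono by metis
qed

lemma af_lim: "(\<lambda>n. af \<nu> A \<eta> lam (v n) y) \<longlonglongrightarrow> af \<nu> A \<eta> lam w y"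
  unfolding af_def using vshift_lim[of 0] Gi_lim by (intro tendsto_intros) auto


abbreviation "Bn n \<equiv> grad (v n) (xn n)"
abbreviation "B0 \<equiv> grad w x0"
abbreviation "en n \<equiv> enf \<nu> A (v n) w (xn n) x0"

lemma beta_lim: "(\<lambda>n. norm (Bn n - B0)) \<longlonglongrightarrow> 0"
  using gshift_lim[of 0] by simp

lemma mN: "(\<lambda>z. norm (grad (v n) (xn n + z) - grad w (x0 + z))) \<in> borel_measurable borel"
  by (rule borel_measurable_continuous_onI)
     (use c_gu[OF gv \<gamma>(1), of n "xn n"] c_gu[OF gw \<gamma>(1), of x0] in \<open>auto intro!: continuous_intros\<close>)

lemma N_le1: "norm (grad (v n) (xn n + z) - grad w (x0 + z)) \<le> 1"
  using norm_triangle_ineq4[of "grad (v n) (xn n + z)" "grad w (x0 + z)"] g_norm[OF gv[of n], of "xn n + z"] g_norm[OF gw, of "x0 + z"]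
  by linarith

lemma en_lim: "en \<longlonglongrightarrow> 0"
proof -
  have "(\<lambda>n. (LINT z:A|\<nu>. norm (grad (v n) (xn n + z) - grad w (x0 + z)))) \<longlonglongrightarrow> (LINT z:A|\<nu>. (0::real))"
  proof (rule set_DCT[where c=1])
    show "(\<lambda>z. norm (grad (v i) (xn i + z) - grad w (x0 + z))) \<in> borel_measurable borel" for i by (rule mN)
    show "(\<lambda>i. norm (grad (v i) (xn i + z) - grad w (x0 + z))) \<longlonglongrightarrow> 0" for z by (rule gshift_lim)
    show "norm (norm (grad (v i) (xn i + z) - grad w (x0 + z))) \<le> 1" for i z using N_le1 by simp
  qed simp
  then show ?thesis unfolding enf_def by simp
qed

lemma en_nn: "0 \<le> en n"
  unfolding enf_def set_lebesgue_integral_def by (intro Bochner_Integration.integral_nonneg) (auto simp: indicator_def)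

lemma Li_diff: "norm (Li \<nu> A (v n) (xn n) k - Li \<nu> A w x0 k) \<le> (en n + measure \<nu> A * norm (Bn n - B0)) * norm k"
proof -
  define F where "F z = (blinfun_apply (grad (v n) (xn n + z)) k - blinfun_apply (Bn n) k) - (blinfun_apply (grad w (x0 + z)) k - blinfun_apply B0 k)" for z
  have si1: "set_integrable \<nu> A (\<lambda>z. blinfun_apply (grad (v n) (xn n + z)) k - blinfun_apply (Bn n) k)"
    by (rule Li_si[OF gv \<gamma>(1)])
  have si2: "set_integrable \<nu> A (\<lambda>z. blinfun_apply (grad w (x0 + z)) k - blinfun_apply B0 k)"
    by (rule Li_si[OF gw \<gamma>(1)])
  have eq: "Li \<nu> A (v n) (xn n) k - Li \<nu> A w x0 k = (LINT z:A|\<nu>. F z)"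
    unfolding Li_def F_def by (rule set_integral_diff(2)[OF si1 si2, symmetric])
  have siF: "set_integrable \<nu> A F" unfolding F_def by (rule set_integral_diff(1)[OF si1 si2])
  have Fb: "norm (F z) \<le> norm k * norm (grad (v n) (xn n + z) - grad w (x0 + z)) + norm (Bn n - B0) * norm k" for z
  proof -
    have "F z = blinfun_apply (grad (v n) (xn n + z) - grad w (x0 + z)) k - blinfun_apply (Bn n - B0) k"
      unfolding F_def by (simp add: blinfun.diff_left algebra_simps)
    note Fe = this
    have "norm (blinfun_apply (grad (v n) (xn n + z) - grad w (x0 + z)) k - blinfun_apply (Bn n - B0) k) \<le> norm (grad (v n) (xn n + z) - grad w (x0 + z)) * norm k + norm (Bn n - B0) * norm k"
      using norm_triangle_ineq4[of "blinfun_apply (grad (v n) (xn n + z) - grad w (x0 + z)) k" "blinfun_apply (Bn n - B0) k"]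
        norm_blinfun[of "grad (v n) (xn n + z) - grad w (x0 + z)" k] norm_blinfun[of "Bn n - B0" k] by linarith
    then show ?thesis unfolding Fe by (simp add: mult.commute)
  qed
  have mF: "(\<lambda>z. norm (F z)) \<in> borel_measurable borel"
    unfolding F_def by (rule borel_measurable_continuous_onI)
      (use c_gu[OF gv \<gamma>(1), of n "xn n"] c_gu[OF gw \<gamma>(1), of x0] in \<open>auto intro!: continuous_intros\<close>)
  have siN: "set_integrable \<nu> A (\<lambda>z. norm k * norm (grad (v n) (xn n + z) - grad w (x0 + z)))"
  proof (rule si_bound[where c="norm k"])
    show "(\<lambda>z. norm k * norm (grad (v n) (xn n + z) - grad w (x0 + z))) \<in> borel_measurable borel"
      using mN by (intro borel_measurable_times borel_measurable_const) auto
    show "norm (norm k * norm (grad (v n) (xn n + z) - grad w (x0 + z))) \<le> norm k" for z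
      using N_le1[of n z] mult_left_mono[of _ 1 "norm k"] by simp
  qed
  have siC: "set_integrable \<nu> A (\<lambda>z. norm (Bn n - B0) * norm k)"
    by (rule si_bound[where c="norm (Bn n - B0) * norm k"]) auto
  have "norm (LINT z:A|\<nu>. F z) \<le> (LINT z:A|\<nu>. norm (F z))" by (rule set_integral_norm_bound[OF siF])
  also have "\<dots> \<le> (LINT z:A|\<nu>. norm k * norm (grad (v n) (xn n + z) - grad w (x0 + z)) + norm (Bn n - B0) * norm k)"
  proof (rule set_integral_mono)
    show "set_integrable \<nu> A (\<lambda>z. norm (F z))"
    proof (rule si_bound[OF mF])
      fix z show "norm (norm (F z)) \<le> norm k + norm (Bn n - B0) * norm k"
        using Fb[of z] mult_left_mono[OF N_le1[of n z], of "norm k"] by simp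
    qed
    show "set_integrable \<nu> A (\<lambda>z. norm k * norm (grad (v n) (xn n + z) - grad w (x0 + z)) + norm (Bn n - B0) * norm k)"
      by (rule set_integral_add(1)[OF siN siC])
  qed (rule Fb)
  also have "\<dots> = norm k * en n + measure \<nu> A * (norm (Bn n - B0) * norm k)"
    using set_integral_add(2)[OF siN siC] A_nu A_fin unfolding enf_def by (simp add: set_integral_const)
  also have "\<dots> = (en n + measure \<nu> A * norm (Bn n - B0)) * norm k" by (simp add: algebra_simps)
  finally show ?thesis unfolding eq .
qed

lemma Kf_diff: "norm (Kf \<nu> A lam (v n) (xn n) k - Kf \<nu> A lam w x0 k) \<le> (lam * norm (Bn n - B0) + en n + measure \<nu> A * norm (Bn n - B0)) * norm k"
proof -
  have e: "Kf \<nu> A lam (v n) (xn n) k - Kf \<nu> A lam w x0 k = lam *\<^sub>R blinfun_apply (Bn n - B0) k - (Li \<nu> A (v n) (xn n) k - Li \<nu> A w x0 k)"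
    unfolding Kf_def by (simp add: blinfun.diff_left algebra_simps)
  have b: "norm (lam *\<^sub>R blinfun_apply (Bn n - B0) k - (Li \<nu> A (v n) (xn n) k - Li \<nu> A w x0 k)) \<le> lam * (norm (Bn n - B0) * norm k) + (en n + measure \<nu> A * norm (Bn n - B0)) * norm k"
  proof -
    have "norm (lam *\<^sub>R blinfun_apply (Bn n - B0) k) \<le> lam * (norm (Bn n - B0) * norm k)"
    proof -
      have "norm (lam *\<^sub>R blinfun_apply (Bn n - B0) k) = lam * norm (blinfun_apply (Bn n - B0) k)"
        using lam by simp
      then show ?thesis using mult_left_mono[OF norm_blinfun[of "Bn n - B0" k] lam] by linarith
    qed
    then show ?thesis by (rule order_trans[OF norm_triangle_ineq4 add_mono[OF _ Li_diff]])
  qed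
  have r: "lam * (norm (Bn n - B0) * norm k) + (en n + measure \<nu> A * norm (Bn n - B0)) * norm k
     = (lam * norm (Bn n - B0) + en n + measure \<nu> A * norm (Bn n - B0)) * norm k"
    by (simp add: algebra_simps)
  show ?thesis unfolding e using b r by simp
qed

abbreviation "dn n \<equiv> 2 * (lam * norm (Bn n - B0) + en n + measure \<nu> A * norm (Bn n - B0)) + (lam / 2 + measure \<nu> A) * (4 * norm (Bn n - B0))"

lemma grad_diff: "norm (grad (af \<nu> A \<eta> lam (v n)) y - grad (af \<nu> A \<eta> lam w) y) \<le> dn n"
proof (rule norm_blinfun_bound)
  have Mvn: "\<And>x. norm (v n x) \<le> M" using Mv by blast
  show "0 \<le> dn n" using lam en_nn[of n] by (intro add_nonneg_nonneg mult_nonneg_nonneg) auto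
  fix h
  define Pn where "Pn = Linv (Bn n) h" define P where "P = Linv B0 h"
  have e: "blinfun_apply (grad (af \<nu> A \<eta> lam (v n)) y - grad (af \<nu> A \<eta> lam w) y) h
     = (Kf \<nu> A lam (v n) (xn n) Pn - Kf \<nu> A lam w x0 Pn) + Kf \<nu> A lam w x0 (Pn - P)"
    unfolding blinfun.diff_left grad_af[OF gv \<gamma>(1) \<gamma>(2) lam Mvn] grad_af[OF gw \<gamma>(1) \<gamma>(2) lam Mw] Da_def Pn_def P_def
    using linear_diff[OF bounded_linear.linear[OF Kf_lin[OF gw \<gamma>(1) \<gamma>(2) lam Mw]]] by simp
  have "norm ((Kf \<nu> A lam (v n) (xn n) Pn - Kf \<nu> A lam w x0 Pn) + Kf \<nu> A lam w x0 (Pn - P)) \<le> (lam * norm (Bn n - B0) + en n + measure \<nu> A * norm (Bn n - B0)) * norm Pn + (lam / 2 + measure \<nu> A) * norm (Pn - P)"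
    by (rule order_trans[OF norm_triangle_ineq add_mono[OF Kf_diff Kf_bound[OF gw \<gamma>(1) \<gamma>(2) lam Mw]]])
  also have "\<dots> \<le> (lam * norm (Bn n - B0) + en n + measure \<nu> A * norm (Bn n - B0)) * (2 * norm h) + (lam / 2 + measure \<nu> A) * (4 * norm (Bn n - B0) * norm h)"
  proof (rule add_mono)
    show "(lam * norm (Bn n - B0) + en n + measure \<nu> A * norm (Bn n - B0)) * norm Pn \<le> (lam * norm (Bn n - B0) + en n + measure \<nu> A * norm (Bn n - B0)) * (2 * norm h)"
      using Linv_norm[OF g_norm[OF gv[of n]], of "xn n" h] lam en_nn[of n] unfolding Pn_def
      by (intro mult_left_mono) auto
    show "(lam / 2 + measure \<nu> A) * norm (Pn - P) \<le> (lam / 2 + measure \<nu> A) * (4 * norm (Bn n - B0) * norm h)"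
      using Linv_diff[OF g_norm[OF gv[of n], of "xn n"] g_norm[OF gw, of x0], of h] lam unfolding Pn_def P_def
      by (intro mult_left_mono) auto
  qed
  also have "\<dots> = dn n * norm h" by (simp add: algebra_simps)
  finally show "norm (blinfun_apply (grad (af \<nu> A \<eta> lam (v n)) y - grad (af \<nu> A \<eta> lam w) y) h) \<le> dn n * norm h"
    unfolding e .
qed

lemma grad_lim: "(\<lambda>n. grad (af \<nu> A \<eta> lam (v n)) y) \<longlonglongrightarrow> grad (af \<nu> A \<eta> lam w) y"
proof (rule tend_bound[OF grad_diff])
  show "dn \<longlonglongrightarrow> 0"
  proof -
    have "dn \<longlonglongrightarrow> 2 * (lam * 0 + 0 + measure \<nu> A * 0) + (lam / 2 + measure \<nu> A) * (4 * 0)"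
      by (intro tendsto_intros beta_lim en_lim)
    then show ?thesis by simp
  qed
qed

end
end

lemma holder_mono: "holder_norm_le g f C \<Longrightarrow> C \<le> C' \<Longrightarrow> holder_norm_le g f C'"
  unfolding holder_norm_le_def by (meson order_trans)

lemma tendsto_from_le:
  fixes f :: "nat \<Rightarrow> 'b::real_normed_vector"
  assumes "\<And>e. e > 0 \<Longrightarrow> eventually (\<lambda>n. norm (f n - l) \<le> e) sequentially"
  shows "f \<longlonglongrightarrow> l"
proof (rule tendstoI)
  fix e :: real assume "0 < e"
  then have "eventually (\<lambda>n. norm (f n - l) \<le> e/2) sequentially" by (intro assms) simp
  then show "eventually (\<lambda>n. dist (f n) l < e) sequentially"
    by eventually_elim (use \<open>0 < e\<close> in \<open>auto simp: dist_norm\<close>)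
qed

lemma acoef_eq: "acoef \<nu> \<eta> lam r0 u n s = af \<nu> {z. r0 \<le> norm z} \<eta> lam (u n s)"
proof -
  have "Phi u n s = (\<lambda>x. x + u n s x)" by (rule ext) (simp add: Phi_def)
  then show ?thesis by (intro ext) (simp add: acoef_def af_def Gi_def psi_def)
qed

lemma levy_fin:
  fixes \<nu> :: "'a::euclidean_space measure"
  assumes L: "levy_measure \<nu>" and r0: "0 < r0"
  shows "lev \<nu> {z. r0 \<le> norm z}"
proof
  show sets: "sets \<nu> = sets borel" using L unfolding levy_measure_def by blast
  show Ab: "{z::'a. r0 \<le> norm z} \<in> sets borel" by measurable
  define c where "c = min 1 (r0^2)"
  have c: "0 < c" unfolding c_def using r0 by simp
  have "(\<integral>\<^sup>+ z. ennreal c * indicator {z. r0 \<le> norm z} z \<partial>\<nu>) \<le> (\<integral>\<^sup>+ z. ennreal (min 1 (norm z ^ 2)) \<partial>\<nu>)"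
  proof (rule nn_integral_mono)
    fix z :: 'a
    show "ennreal c * indicator {z. r0 \<le> norm z} z \<le> ennreal (min 1 (norm z ^ 2))"
    proof (cases "r0 \<le> norm z")
      case True
      then have "r0^2 \<le> norm z ^ 2" using r0 by (intro power_mono) auto
      then have "c \<le> min 1 (norm z ^ 2)" unfolding c_def by auto
      then show ?thesis using True by (simp add: indicator_def)
    qed (simp add: indicator_def)
  qed
  also have "\<dots> < \<infinity>" using L unfolding levy_measure_def by blast
  finally have "ennreal c * emeasure \<nu> {z. r0 \<le> norm z} < \<infinity>"
    using nn_integral_cmult_indicator[of "{z. r0 \<le> norm z}" \<nu> "ennreal c"] Ab sets by simp
  then show "emeasure \<nu> {z. r0 \<le> norm z} < \<infinity>"
    using c by (auto simp: ennreal_mult_less_top)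
qed

theorem lemma3p3:
  fixes \<nu> :: "'a::euclidean_space measure" and \<eta> :: 'a and lam \<gamma> r0 :: real
  assumes "levy_measure \<nu>" and "0 < \<gamma>" and "\<gamma> < 1" and "0 \<le> lam"
    and "0 < r0" and "r0 < 1"
  shows "\<exists>C2>0. \<forall>(b :: real \<Rightarrow> 'a \<Rightarrow> 'a) (u :: enat \<Rightarrow> real \<Rightarrow> 'a \<Rightarrow> 'a) (C0::real).
    ( (\<lambda>p. b (fst p) (snd p)) \<in> borel_measurable borel
    \<and> (\<exists>M. \<forall>t\<in>{0..1}. \<forall>x. norm (b t x) \<le> M)
    \<and> (\<forall>n. \<forall>t\<in>{0..1}. (\<forall>x. u n t differentiable (at x)) \<and> continuous_on UNIV (grad (u n t)))
    \<and> (\<forall>n. \<forall>t\<in>{0..1}. \<forall>x. norm (u n t x) \<le> (SUP t'\<in>{0..1}. SUP x'. norm (b t' x')))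
    \<and> (\<forall>n. \<forall>t\<in>{0..1}. holder_norm_le \<gamma> (grad (u n t)) (1/2))
    \<and> (\<forall>R>0. \<forall>e>0. \<forall>\<^sub>F n in sequentially. \<forall>t\<in>{0..1}. \<forall>x. norm x \<le> R \<longrightarrow>
          norm (u (enat n) t x - u \<infinity> t x) \<le> e \<and>
          norm (grad (u (enat n) t) x - grad (u \<infinity> t) x) \<le> e)
    \<and> 0 < C0
    \<and> (\<forall>n. \<forall>s\<in>{0..1}. \<forall>z y. (\<lambda>y'. gfun u n s y' z) differentiable (at y) \<and>
          norm (grad (\<lambda>y'. gfun u n s y' z) y) \<le> C0 * min 1 (norm z powr \<gamma>))
    \<and> C0 * r0 powr \<gamma> + 3 * r0 / 2 < 1 )
    \<longrightarrow>
    ( (\<forall>n. \<forall>s\<in>{0..1}.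
          (\<forall>y. acoef \<nu> \<eta> lam r0 u n s differentiable (at y))
        \<and> holder_norm_le \<gamma> (grad (acoef \<nu> \<eta> lam r0 u n s)) C2
        \<and> (\<forall>y. norm (acoef \<nu> \<eta> lam r0 u n s y)
               \<le> C2 * (1 + (SUP t\<in>{0..1}. SUP x. norm (b t x)))))
    \<and> (\<forall>t\<in>{0..1}. \<forall>y.
          (\<lambda>n. acoef \<nu> \<eta> lam r0 u (enat n) t y) \<longlonglongrightarrow> acoef \<nu> \<eta> lam r0 u \<infinity> t y
        \<and> (\<lambda>n. grad (acoef \<nu> \<eta> lam r0 u (enat n) t) y) \<longlonglongrightarrow> grad (acoef \<nu> \<eta> lam r0 u \<infinity> t) y))"
proof -
  note L = assms(1) and \<gamma> = assms(2,3) and lam = assms(4) and r0 = assms(5)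
  define A where "A = {z::'a. r0 \<le> norm z}"
  interpret lev \<nu> A unfolding A_def by (rule levy_fin[OF L r0])
  define \<mu> where "\<mu> = measure \<nu> A"
  have \<mu>0: "0 \<le> \<mu>" unfolding \<mu>_def by simp
  define C2 where "C2 = 10 * (lam / 2 + \<mu>) + norm \<eta> + lam + 2 * \<mu> + 1"
  have C2: "0 < C2" unfolding C2_def by (intro add_nonneg_pos add_nonneg_nonneg mult_nonneg_nonneg divide_nonneg_nonneg) (use lam \<mu>0 in auto)
  show ?thesis
  proof (intro exI[of _ C2] conjI[OF C2] allI impI)
    fix b :: "real \<Rightarrow> 'a \<Rightarrow> 'a" and u :: "enat \<Rightarrow> real \<Rightarrow> 'a \<Rightarrow> 'a" and C0 :: real
    assume H: "(\<lambda>p. b (fst p) (snd p)) \<in> borel_measurable borel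
    \<and> (\<exists>M. \<forall>t\<in>{0..1}. \<forall>x. norm (b t x) \<le> M)
    \<and> (\<forall>n. \<forall>t\<in>{0..1}. (\<forall>x. u n t differentiable (at x)) \<and> continuous_on UNIV (grad (u n t)))
    \<and> (\<forall>n. \<forall>t\<in>{0..1}. \<forall>x. norm (u n t x) \<le> (SUP t'\<in>{0..1}. SUP x'. norm (b t' x')))
    \<and> (\<forall>n. \<forall>t\<in>{0..1}. holder_norm_le \<gamma> (grad (u n t)) (1/2))
    \<and> (\<forall>R>0. \<forall>e>0. \<forall>\<^sub>F n in sequentially. \<forall>t\<in>{0..1}. \<forall>x. norm x \<le> R \<longrightarrow>
          norm (u (enat n) t x - u \<infinity> t x) \<le> e \<and>
          norm (grad (u (enat n) t) x - grad (u \<infinity> t) x) \<le> e)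
    \<and> 0 < C0
    \<and> (\<forall>n. \<forall>s\<in>{0..1}. \<forall>z y. (\<lambda>y'. gfun u n s y' z) differentiable (at y) \<and>
          norm (grad (\<lambda>y'. gfun u n s y' z) y) \<le> C0 * min 1 (norm z powr \<gamma>))
    \<and> C0 * r0 powr \<gamma> + 3 * r0 / 2 < 1"
    define Mb where "Mb = (SUP t\<in>{0..1}. SUP x. norm (b t x))"
    note A3 = H[THEN conjunct2, THEN conjunct2, THEN conjunct1]
    note A4 = H[THEN conjunct2, THEN conjunct2, THEN conjunct2, THEN conjunct1]
    note A5 = H[THEN conjunct2, THEN conjunct2, THEN conjunct2, THEN conjunct2, THEN conjunct1]
    note A6 = H[THEN conjunct2, THEN conjunct2, THEN conjunct2, THEN conjunct2, THEN conjunct2, THEN conjunct1]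
    have Hd: "\<And>n t. t \<in> {0..1} \<Longrightarrow> (\<forall>x. u n t differentiable (at x)) \<and> continuous_on UNIV (grad (u n t))"
      using A3 by blast
    have Hb: "\<And>n t x. t \<in> {0..1} \<Longrightarrow> norm (u n t x) \<le> Mb" using A4 unfolding Mb_def by blast
    have Hh: "\<And>n t. t \<in> {0..1} \<Longrightarrow> holder_norm_le \<gamma> (grad (u n t)) (1/2)" using A5 by blast
    have Hc: "\<And>R e. R > 0 \<Longrightarrow> e > 0 \<Longrightarrow> \<forall>\<^sub>F n in sequentially. \<forall>t\<in>{0..1}. \<forall>x. norm x \<le> R \<longrightarrow>
          norm (u (enat n) t x - u \<infinity> t x) \<le> e \<and>
          norm (grad (u (enat n) t) x - grad (u \<infinity> t) x) \<le> e" using A6 by blast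
    have Mb0: "0 \<le> Mb" using Hb[of 0 0 0] norm_ge_zero[of "u 0 0 0"] by (simp del: norm_ge_zero)
    have good: "good \<gamma> (u n t)" if "t \<in> {0..1}" for n t
      using Hd[OF that] Hh[OF that] by (intro good_intro) auto
    have part1: "\<forall>n. \<forall>s\<in>{0..1::real}.
          (\<forall>y. acoef \<nu> \<eta> lam r0 u n s differentiable (at y))
        \<and> holder_norm_le \<gamma> (grad (acoef \<nu> \<eta> lam r0 u n s)) C2
        \<and> (\<forall>y. norm (acoef \<nu> \<eta> lam r0 u n s y) \<le> C2 * (1 + (SUP t\<in>{0..1}. SUP x. norm (b t x))))"
    proof (intro allI ballI conjI)
      fix n and s :: real assume s: "s \<in> {0..1}"
      have Mv: "\<And>x. norm (u n s x) \<le> Mb" using Hb[OF s] by blast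
      note ae = acoef_eq[of \<nu> \<eta> lam r0 u n s, folded A_def]
      show "acoef \<nu> \<eta> lam r0 u n s differentiable (at y)" for y
        unfolding ae using af_der[OF good[OF s] \<gamma> lam Mv] by (rule differentiableI)
      show "holder_norm_le \<gamma> (grad (acoef \<nu> \<eta> lam r0 u n s)) C2"
        unfolding ae
      proof (rule holder_mono[OF af_holder[OF good[OF s] \<gamma> lam Mv]])
        show "10 * (lam / 2 + measure \<nu> A) \<le> C2" unfolding C2_def \<mu>_def using lam \<mu>0 \<mu>_def by simp
      qed
      show "norm (acoef \<nu> \<eta> lam r0 u n s y) \<le> C2 * (1 + (SUP t\<in>{0..1}. SUP x. norm (b t x)))" for y
      proof -
        have "norm (acoef \<nu> \<eta> lam r0 u n s y) \<le> norm \<eta> + lam * Mb + 2 * Mb * \<mu>"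
          unfolding ae \<mu>_def by (rule af_bound[OF good[OF s] \<gamma> lam Mv])
        also have "\<dots> \<le> C2 * (1 + Mb)"
        proof -
          have "norm \<eta> + lam * Mb + 2 * Mb * \<mu> \<le> (norm \<eta> + lam + 2 * \<mu>) * (1 + Mb)"
            using lam Mb0 \<mu>0 by (simp add: algebra_simps mult_nonneg_nonneg)
          also have "\<dots> \<le> C2 * (1 + Mb)"
            using Mb0 lam \<mu>0 unfolding C2_def by (intro mult_right_mono) auto
          finally show ?thesis .
        qed
        finally show ?thesis unfolding Mb_def .
      qed
    qed
    have part2: "\<forall>t\<in>{0..1::real}. \<forall>y.
          (\<lambda>n. acoef \<nu> \<eta> lam r0 u (enat n) t y) \<longlonglongrightarrow> acoef \<nu> \<eta> lam r0 u \<infinity> t y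
        \<and> (\<lambda>n. grad (acoef \<nu> \<eta> lam r0 u (enat n) t) y) \<longlonglongrightarrow> grad (acoef \<nu> \<eta> lam r0 u \<infinity> t) y"
    proof (intro ballI allI)
      fix t :: real and y assume t: "t \<in> {0..1}"
      have cu: "(\<lambda>n. u (enat n) t x) \<longlonglongrightarrow> u \<infinity> t x" for x
      proof (rule tendsto_from_le)
        fix e :: real assume e: "0 < e"
        have "norm x + 1 > 0" by (simp add: add_nonneg_pos)
        from Hc[OF this e] show "eventually (\<lambda>n. norm (u (enat n) t x - u \<infinity> t x) \<le> e) sequentially"
          by eventually_elim (use t in auto)
      qed
      have cg: "(\<lambda>n. grad (u (enat n) t) x) \<longlonglongrightarrow> grad (u \<infinity> t) x" for x
      proof (rule tendsto_from_le)
        fix e :: real assume e: "0 < e"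
        have "norm x + 1 > 0" by (simp add: add_nonneg_pos)
        from Hc[OF this e] show "eventually (\<lambda>n. norm (grad (u (enat n) t) x - grad (u \<infinity> t) x) \<le> e) sequentially"
          by eventually_elim (use t in auto)
      qed
      have Mv: "\<And>n x. norm (u (enat n) t x) \<le> Mb" using Hb[OF t] by blast
      have Mw: "\<And>x. norm (u \<infinity> t x) \<le> Mb" using Hb[OF t] by blast
      have gv: "\<And>n. good \<gamma> (u (enat n) t)" using good[OF t] by blast
      note ae1 = acoef_eq[of \<nu> \<eta> lam r0 u _ t, folded A_def]
      show "(\<lambda>n. acoef \<nu> \<eta> lam r0 u (enat n) t y) \<longlonglongrightarrow> acoef \<nu> \<eta> lam r0 u \<infinity> t y
        \<and> (\<lambda>n. grad (acoef \<nu> \<eta> lam r0 u (enat n) t) y) \<longlonglongrightarrow> grad (acoef \<nu> \<eta> lam r0 u \<infinity> t) y"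
        unfolding ae1
        by (intro conjI af_lim[OF gv good[OF t] \<gamma> lam Mv Mw cu cg] grad_lim[OF gv good[OF t] \<gamma> lam Mv Mw cu cg])
    qed
    show "(\<forall>n. \<forall>s\<in>{0..1::real}.
          (\<forall>y. acoef \<nu> \<eta> lam r0 u n s differentiable (at y))
        \<and> holder_norm_le \<gamma> (grad (acoef \<nu> \<eta> lam r0 u n s)) C2
        \<and> (\<forall>y. norm (acoef \<nu> \<eta> lam r0 u n s y)
               \<le> C2 * (1 + (SUP t\<in>{0..1}. SUP x. norm (b t x)))))
    \<and> (\<forall>t\<in>{0..1::real}. \<forall>y.
          (\<lambda>n. acoef \<nu> \<eta> lam r0 u (enat n) t y) \<longlonglongrightarrow> acoef \<nu> \<eta> lam r0 u \<infinity> t y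
        \<and> (\<lambda>n. grad (acoef \<nu> \<eta> lam r0 u (enat n) t) y) \<longlonglongrightarrow> grad (acoef \<nu> \<eta> lam r0 u \<infinity> t) y)"
      by (rule conjI[OF part1 part2])
  qed
qed

end
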